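(* Let $p$ be a two-phase solution with constants $c_0,c_1,c_2$. At points where $p\neq0$, $$\partial_x\nu_1=2i\nu_1(\mu_1+\mu_2-\mu_1^*-\mu_2^* ),\qquad \partial_x\nu_2=4i\nu_1(\mu_1^*\mu_2^*-\mu_1\mu_2)-2c_2\,\partial_x\nu_1,\qquad \partial_t\nu_1=\partial_x\nu_2,$$ $$\partial_t\nu_2=8i\nu_1\big((\mu_1-\mu_1^* )|\mu_2|^2+(\mu_2-\mu_2^* )|\mu_1|^2\big)-4c_2\,\partial_x\nu_2-4c_2^2\,\partial_x\nu_1.$$
   Context: Let $p(x,t)$, $(x,t)\in\mathbb R^2$, be a smooth complex-valued solution of the focusing nonlinear Schrödinger equation $ip_t+p_{xx}+2|p|^2p=0$; $^*$ denotes complex conjugation and subscripts denote partial derivatives. Put $\mathbb U=\begin{pmatrix}-i\lambda& ip\\ ip^*& i\lambda\end{pmatrix}$ and $\mathbb V=\begin{pmatrix}-2i\lambda^2+i|p|^2& 2i\lambda p-p_x\\ 2i\lambda p^*+p^*_x& 2i\lambda^2-i|p|^2\end{pmatrix}$. The solution $p$ is called a two-phase solution if there exist real constants $c_0,c_1,c_2$ such that the matrix $\Psi=\begin{pmatrix}\Psi_{11}&\Psi_{12}\\ \Psi_{21}&-\Psi_{11}\end{pmatrix}$ with $\Psi_{11}=-i\lambda^3-ic_2\lambda^2+(\tfrac12 i|p|^2-ic_1)\lambda+\tfrac14(pp^*_x-p_xp^* )+\tfrac12 ic_2|p|^2-ic_0$, $\Psi_{12}=ip\lambda^2+(-\tfrac12p_x+ic_2p)\lambda-\tfrac14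 ip_{xx}-\tfrac12 ip|p|^2-\tfrac12c_2p_x+ic_1p$, $\Psi_{21}=ip^*\lambda^2+(\tfrac12p^*_x+ic_2p^* )\lambda-\tfrac14 ip^*_{xx}-\tfrac12 ip^*|p|^2+\tfrac12c_2p^*_x+ic_1p^*$ satisfies $\Psi_x=[\mathbb U,\Psi]$ and $\Psi_t=[\mathbb V,\Psi]$ identically in $\lambda\in\mathbb C$. Set $\nu_1=|p|^2$ and $\nu_2=i(p^*p_x-pp^*_x)$ (both real). At points where $p\neq0$ the Dirichlet eigenvalues $\mu_1,\mu_2\in\mathbb C$ are defined (up to order) by $\Psi_{12}(\lambda)=ip(\lambda-\mu_1)(\lambda-\mu_2)$. *)

theory Defs
  imports "HOL-Analysis.Analysis"
begin

definition pdx :: "(real \<Rightarrow> real \<Rightarrow> 'a::real_normed_vector) \<Rightarrow> real \<Rightarrow> real \<Rightarrow> 'a" where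
  "pdx f x t = vector_derivative (\<lambda>y. f y t) (at x)"

definition pdt :: "(real \<Rightarrow> real \<Rightarrow> 'a::real_normed_vector) \<Rightarrow> real \<Rightarrow> real \<Rightarrow> 'a" where
  "pdt f x t = vector_derivative (\<lambda>s. f x s) (at t)"

text \<open>Iterated partial derivatives: True = d/dx, False = d/dt.\<close>
fun iter_pd :: "bool list \<Rightarrow> (real \<Rightarrow> real \<Rightarrow> complex) \<Rightarrow> real \<Rightarrow> real \<Rightarrow> complex" where
  "iter_pd [] f = f"
| "iter_pd (d # ds) f = (if d then pdx (iter_pd ds f) else pdt (iter_pd ds f))"

text \<open>Smooth (C-infinity): every iterated partial derivative is (Frechet) differentiable
  everywhere as a function of (x,t); hence all partial derivatives exist and are continuous.\<close>
definition smooth2 :: "(real \<Rightarrow> real \<Rightarrow> complex) \<Rightarrow> bool" where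
  "smooth2 f \<longleftrightarrow> (\<forall>ds z. (\<lambda>w. iter_pd ds f (fst w) (snd w)) differentiable (at z))"

definition nls_solution :: "(real \<Rightarrow> real \<Rightarrow> complex) \<Rightarrow> bool" where
  "nls_solution p \<longleftrightarrow> smooth2 p \<and>
     (\<forall>x t. \<i> * pdt p x t + pdx (pdx p) x t + 2 * (complex_of_real (cmod (p x t)))\<^sup>2 * p x t = 0)"

definition conjf :: "(real \<Rightarrow> real \<Rightarrow> complex) \<Rightarrow> real \<Rightarrow> real \<Rightarrow> complex" where
  "conjf p x t = cnj (p x t)"

definition mat2 :: "complex \<Rightarrow> complex \<Rightarrow> complex \<Rightarrow> complex \<Rightarrow> complex^2^2" where
  "mat2 a b c d = (\<chi> i j. if i = 1 then (if j = 1 then a else b) else (if j = 1 then c else d))"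

definition Umat :: "(real \<Rightarrow> real \<Rightarrow> complex) \<Rightarrow> complex \<Rightarrow> real \<Rightarrow> real \<Rightarrow> complex^2^2" where
  "Umat p lam x t = mat2 (-\<i>*lam) (\<i> * p x t) (\<i> * cnj (p x t)) (\<i>*lam)"

definition Vmat :: "(real \<Rightarrow> real \<Rightarrow> complex) \<Rightarrow> complex \<Rightarrow> real \<Rightarrow> real \<Rightarrow> complex^2^2" where
  "Vmat p lam x t = mat2
     (-2*\<i>*lam\<^sup>2 + \<i> * (complex_of_real (cmod (p x t)))\<^sup>2)
     (2*\<i>*lam * p x t - pdx p x t)
     (2*\<i>*lam * cnj (p x t) + pdx (conjf p) x t)
     (2*\<i>*lam\<^sup>2 - \<i> * (complex_of_real (cmod (p x t)))\<^sup>2)"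

definition Psi11 :: "(real \<Rightarrow> real \<Rightarrow> complex) \<Rightarrow> real \<Rightarrow> real \<Rightarrow> real \<Rightarrow> complex \<Rightarrow> real \<Rightarrow> real \<Rightarrow> complex" where
  "Psi11 p c0 c1 c2 lam x t =
     -\<i>*lam^3 - \<i>*c2*lam\<^sup>2 + (\<i>/2 * (complex_of_real (cmod (p x t)))\<^sup>2 - \<i>*c1)*lam
     + 1/4 * (p x t * pdx (conjf p) x t - pdx p x t * cnj (p x t))
     + \<i>/2 * c2 * (complex_of_real (cmod (p x t)))\<^sup>2 - \<i>*c0"

definition Psi12 :: "(real \<Rightarrow> real \<Rightarrow> complex) \<Rightarrow> real \<Rightarrow> real \<Rightarrow> real \<Rightarrow> complex \<Rightarrow> real \<Rightarrow> real \<Rightarrow> complex" where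
  "Psi12 p c0 c1 c2 lam x t =
     \<i> * p x t * lam\<^sup>2 + (-1/2 * pdx p x t + \<i>*c2 * p x t)*lam
     - \<i>/4 * pdx (pdx p) x t - \<i>/2 * p x t * (complex_of_real (cmod (p x t)))\<^sup>2
     - 1/2 * c2 * pdx p x t + \<i>*c1 * p x t"

definition Psi21 :: "(real \<Rightarrow> real \<Rightarrow> complex) \<Rightarrow> real \<Rightarrow> real \<Rightarrow> real \<Rightarrow> complex \<Rightarrow> real \<Rightarrow> real \<Rightarrow> complex" where
  "Psi21 p c0 c1 c2 lam x t =
     \<i> * cnj (p x t) * lam\<^sup>2 + (1/2 * pdx (conjf p) x t + \<i>*c2 * cnj (p x t))*lam
     - \<i>/4 * pdx (pdx (conjf p)) x t - \<i>/2 * cnj (p x t) * (complex_of_real (cmod (p x t)))\<^sup>2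
     + 1/2 * c2 * pdx (conjf p) x t + \<i>*c1 * cnj (p x t)"

definition Psi :: "(real \<Rightarrow> real \<Rightarrow> complex) \<Rightarrow> real \<Rightarrow> real \<Rightarrow> real \<Rightarrow> complex \<Rightarrow> real \<Rightarrow> real \<Rightarrow> complex^2^2" where
  "Psi p c0 c1 c2 lam x t = mat2 (Psi11 p c0 c1 c2 lam x t) (Psi12 p c0 c1 c2 lam x t)
       (Psi21 p c0 c1 c2 lam x t) (- Psi11 p c0 c1 c2 lam x t)"

definition two_phase :: "(real \<Rightarrow> real \<Rightarrow> complex) \<Rightarrow> real \<Rightarrow> real \<Rightarrow> real \<Rightarrow> bool" where
  "two_phase p c0 c1 c2 \<longleftrightarrow> nls_solution p \<and>
    (\<forall>lam x t. pdx (Psi p c0 c1 c2 lam) x t = Umat p lam x t ** Psi p c0 c1 c2 lam x t - Psi p c0 c1 c2 lam x t ** Umat p lam x t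
           \<and> pdt (Psi p c0 c1 c2 lam) x t = Vmat p lam x t ** Psi p c0 c1 c2 lam x t - Psi p c0 c1 c2 lam x t ** Vmat p lam x t)"

definition nu1 :: "(real \<Rightarrow> real \<Rightarrow> complex) \<Rightarrow> real \<Rightarrow> real \<Rightarrow> complex" where
  "nu1 p x t = (complex_of_real (cmod (p x t)))\<^sup>2"

definition nu2 :: "(real \<Rightarrow> real \<Rightarrow> complex) \<Rightarrow> real \<Rightarrow> real \<Rightarrow> complex" where
  "nu2 p x t = \<i> * (cnj (p x t) * pdx p x t - p x t * pdx (conjf p) x t)"

end

theory Submission
  imports Defs
begin


lemma dx_vd:
  assumes "smooth2 p"
  shows "((\<lambda>y. iter_pd ds p y t) has_vector_derivative pdx (iter_pd ds p) x t) (at x)"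
proof -
  have g: "(\<lambda>w. iter_pd ds p (fst w) (snd w)) differentiable (at (x,t))"
    using assms unfolding smooth2_def by blast
  have f: "(\<lambda>y::real. (y,t)) differentiable (at x)"
    by (intro derivative_intros differentiable_const differentiable_ident)
  have "((\<lambda>w. iter_pd ds p (fst w) (snd w)) \<circ> (\<lambda>y::real. (y,t))) differentiable (at x)"
    using differentiable_chain_at[OF f] g by blast
  hence "(\<lambda>y. iter_pd ds p y t) differentiable (at x)" by (simp add: o_def)
  thus ?thesis unfolding pdx_def using vector_derivative_works by blast
qed

lemma dt_vd:
  assumes "smooth2 p"
  shows "((\<lambda>s. iter_pd ds p x s) has_vector_derivative pdt (iter_pd ds p) x t) (at t)"
proof -
  have g: "(\<lambda>w. iter_pd ds p (fst w) (snd w)) differentiable (at (x,t))"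
    using assms unfolding smooth2_def by blast
  have f: "(\<lambda>s::real. (x,s)) differentiable (at t)"
    by (intro derivative_intros differentiable_const differentiable_ident)
  have "((\<lambda>w. iter_pd ds p (fst w) (snd w)) \<circ> (\<lambda>s::real. (x,s))) differentiable (at t)"
    using differentiable_chain_at[OF f] g by blast
  hence "(\<lambda>s. iter_pd ds p x s) differentiable (at t)" by (simp add: o_def)
  thus ?thesis unfolding pdt_def using vector_derivative_works by blast
qed

lemma conj_pdx:
  assumes "smooth2 p"
  shows "pdx (conjf (iter_pd ds p)) = conjf (pdx (iter_pd ds p))"
proof (intro ext)
  fix x t
  have "((\<lambda>y. cnj (iter_pd ds p y t)) has_vector_derivative cnj (pdx (iter_pd ds p) x t)) (at x)"
    by (rule has_vector_derivative_cnj[OF dx_vd[OF assms]])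
  thus "pdx (conjf (iter_pd ds p)) x t = conjf (pdx (iter_pd ds p)) x t"
    unfolding pdx_def[of "conjf _"] conjf_def by (simp add: vector_derivative_at pdx_def)
qed

lemma conj_pdt:
  assumes "smooth2 p"
  shows "pdt (conjf (iter_pd ds p)) = conjf (pdt (iter_pd ds p))"
proof (intro ext)
  fix x t
  have "((\<lambda>s. cnj (iter_pd ds p x s)) has_vector_derivative cnj (pdt (iter_pd ds p) x t)) (at t)"
    by (rule has_vector_derivative_cnj[OF dt_vd[OF assms]])
  thus "pdt (conjf (iter_pd ds p)) x t = conjf (pdt (iter_pd ds p)) x t"
    unfolding pdt_def[of "conjf _"] conjf_def by (simp add: vector_derivative_at pdt_def)
qed

lemma vec_vd:
  fixes f :: "real \<Rightarrow> 'a::real_normed_vector ^ 'n"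
  assumes "\<And>i. ((\<lambda>s. f s $ i) has_vector_derivative D $ i) (at t)"
  shows "(f has_vector_derivative D) (at t)"
proof -
  have c: "((\<lambda>y. (1 / norm (y - t)) *\<^sub>R ((f y $ i) - ((f t $ i) + (y - t) *\<^sub>R (D $ i)))) \<longlongrightarrow> 0) (at t)" for i
    using assms[of i] unfolding has_vector_derivative_def has_derivative_within[of _ _ t UNIV, simplified] by simp
  have "((\<lambda>y. \<chi> i. (1 / norm (y - t)) *\<^sub>R ((f y $ i) - ((f t $ i) + (y - t) *\<^sub>R (D $ i)))) \<longlongrightarrow> (\<chi> i. 0)) (at t)"
    by (rule tendsto_vec_lambda[OF c])
  moreover have "(\<lambda>y. \<chi> i. (1 / norm (y - t)) *\<^sub>R ((f y $ i) - ((f t $ i) + (y - t) *\<^sub>R (D $ i))))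
     = (\<lambda>y. (1 / norm (y - t)) *\<^sub>R (f y - (f t + (y - t) *\<^sub>R D)))"
    by (auto simp: vec_eq_iff)
  ultimately have "((\<lambda>y. (1 / norm (y - t)) *\<^sub>R (f y - (f t + (y - t) *\<^sub>R D))) \<longlongrightarrow> 0) (at t)"
    by (simp add: zero_vec_def)
  thus ?thesis unfolding has_vector_derivative_def has_derivative_within[of _ _ t UNIV, simplified]
    by (simp add: bounded_linear_scaleR_left)
qed


lemma alg:
  fixes P Q X Y Z W m1 m2 n1 n2 c c1 N1x N2x N1t N2t Pt Qt :: complex
  assumes E1: "-1/2*X + \<i>*c*P = -\<i>*P*(m1+m2)"
    and F1: "-1/2*Y - \<i>*c*Q = \<i>*Q*(n1+n2)"
    and E0: "-\<i>/4*Z - \<i>/2*P*(P*Q) - 1/2*c*X + \<i>*c1*P = \<i>*P*m1*m2"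
    and F0: "\<i>/4*W + \<i>/2*Q*(P*Q) - 1/2*c*Y - \<i>*c1*Q = -\<i>*Q*n1*n2"
    and nls: "\<i>*Pt + Z + 2*(P*Q)*P = 0"
    and cnls: "-\<i>*Qt + W + 2*(P*Q)*Q = 0"
    and d1x: "N1x = P*Y + X*Q"
    and d2x: "N2x = \<i>*(Y*X + Q*Z - (X*Y + P*W))"
    and d1t: "N1t = P*Qt + Pt*Q"
    and lax: "\<i>/4*N2t + \<i>/2*c*N1t = (-X)*(\<i>*Q*n1*n2) - (\<i>*P*m1*m2)*Y"
  shows "N1x = 2*\<i>*(P*Q)*(m1+m2-n1-n2)"
    "N2x = 4*\<i>*(P*Q)*(n1*n2 - m1*m2) - 2*c*N1x"
    "N1t = N2x"
    "N2t = 8*\<i>*(P*Q)*((m1-n1)*(m2*n2) + (m2-n2)*(m1*n1)) - 4*c*N2x - 4*c^2*N1x"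
proof -
  have ii: "\<i>*\<i> = (-1::complex)" by simp
  have X: "X = 2*\<i>*P*(m1+m2) + 2*\<i>*c*P" using E1 by (simp add: field_simps)
  have Y: "Y = -2*\<i>*Q*(n1+n2) - 2*\<i>*c*Q" using F1 apply (simp add: field_simps) by algebra
  have Z: "Z = -4*P*m1*m2 - 2*P*(P*Q) - 2*\<i>*c*X*(-1) + 4*c1*P"
    using E0 apply (simp add: field_simps) using ii by algebra
  have W: "W = -4*Q*n1*n2 - 2*Q*(P*Q) - 2*\<i>*c*Y + 4*c1*Q"
    using F0 apply (simp add: field_simps) using ii by algebra
  have Pt: "Pt = \<i>*Z + 2*\<i>*(P*Q)*P" using nls apply (simp add: field_simps) using ii by algebra
  have Qt: "Qt = -\<i>*W - 2*\<i>*(P*Q)*Q" using cnls apply (simp add: field_simps) using ii by algebra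
  have N2t: "N2t = -4*\<i>*((-X)*(\<i>*Q*n1*n2) - (\<i>*P*m1*m2)*Y) - 2*c*N1t"
    using lax apply (simp add: field_simps) using ii by algebra
  show "N1x = 2*\<i>*(P*Q)*(m1+m2-n1-n2)"
    unfolding d1x X Y by (simp add: algebra_simps)
  show "N2x = 4*\<i>*(P*Q)*(n1*n2 - m1*m2) - 2*c*N1x"
    unfolding d2x d1x Z W X Y by (simp add: algebra_simps)
  show "N1t = N2x"
    unfolding d2x d1t Pt Qt by (simp add: algebra_simps)
  show "N2t = 8*\<i>*(P*Q)*((m1-n1)*(m2*n2) + (m2-n2)*(m1*n1)) - 4*c*N2x - 4*c^2*N1x"
    unfolding N2t d2x d1t d1x Pt Qt Z W X Y by (simp add: algebra_simps power2_eq_square)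
qed

lemma nsq: "(complex_of_real (cmod z))\<^sup>2 = z * cnj z"
  by (metis complex_norm_square of_real_power)

theorem mainTheorem4:
  fixes p :: "real \<Rightarrow> real \<Rightarrow> complex" and c0 c1 c2 x t :: real and \<mu>1 \<mu>2 :: complex
  assumes "two_phase p c0 c1 c2"
    and "p x t \<noteq> 0"
    and "\<forall>lam. Psi12 p c0 c1 c2 lam x t = \<i> * p x t * (lam - \<mu>1) * (lam - \<mu>2)"
  shows "pdx (nu1 p) x t = 2 * \<i> * nu1 p x t * (\<mu>1 + \<mu>2 - cnj \<mu>1 - cnj \<mu>2)
    \<and> pdx (nu2 p) x t = 4 * \<i> * nu1 p x t * (cnj \<mu>1 * cnj \<mu>2 - \<mu>1 * \<mu>2) - 2 * c2 * pdx (nu1 p) x t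
    \<and> pdt (nu1 p) x t = pdx (nu2 p) x t
    \<and> pdt (nu2 p) x t = 8 * \<i> * nu1 p x t * ((\<mu>1 - cnj \<mu>1) * (complex_of_real (cmod \<mu>2))\<^sup>2
                                               + (\<mu>2 - cnj \<mu>2) * (complex_of_real (cmod \<mu>1))\<^sup>2)
                          - 4 * c2 * pdx (nu2 p) x t - 4 * c2\<^sup>2 * pdx (nu1 p) x t"
proof -
  have sm: "smooth2 p" and nls: "\<And>x t. \<i> * pdt p x t + pdx (pdx p) x t + 2 * (complex_of_real (cmod (p x t)))\<^sup>2 * p x t = 0"
    using assms(1) unfolding two_phase_def nls_solution_def by auto
  have lax: "\<And>lam x t. pdt (Psi p c0 c1 c2 lam) x t = Vmat p lam x t ** Psi p c0 c1 c2 lam x t - Psi p c0 c1 c2 lam x t ** Vmat p lam x t"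
    using assms(1) unfolding two_phase_def by auto
  have h: "\<And>lam. Psi12 p c0 c1 c2 lam x t = \<i> * p x t * (lam - \<mu>1) * (lam - \<mu>2)" using assms(3) by auto
  have cx1: "pdx (conjf p) = conjf (pdx p)" using conj_pdx[OF sm, of "[]"] by simp
  have cx2: "pdx (conjf (pdx p)) = conjf (pdx (pdx p))" using conj_pdx[OF sm, of "[True]"] by simp
  have nu1eq: "nu1 p = (\<lambda>x t. p x t * cnj (p x t))" by (auto simp: nu1_def nsq intro!: ext)
  have nu2eq: "nu2 p = (\<lambda>x t. \<i>*(cnj (p x t) * pdx p x t - p x t * cnj (pdx p x t)))"
    by (auto simp: nu2_def cx1 conjf_def intro!: ext)
  have dP: "((\<lambda>y. p y t) has_vector_derivative pdx p x t) (at x)" using dx_vd[OF sm, of "[]"] by simp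
  have dX: "((\<lambda>y. pdx p y t) has_vector_derivative pdx (pdx p) x t) (at x)" using dx_vd[OF sm, of "[True]"] by simp
  have dPt: "((\<lambda>s. p x s) has_vector_derivative pdt p x t) (at t)" using dt_vd[OF sm, of "[]"] by simp
  have dXt: "((\<lambda>s. pdx p x s) has_vector_derivative pdt (pdx p) x t) (at t)" using dt_vd[OF sm, of "[True]"] by simp
  have dZt: "((\<lambda>s. pdx (pdx p) x s) has_vector_derivative pdt (pdx (pdx p)) x t) (at t)" using dt_vd[OF sm, of "[True,True]"] by simp
  define P where "P = p x t"
  define X where "X = pdx p x t"
  define Z where "Z = pdx (pdx p) x t"
  define Pt where "Pt = pdt p x t"
  define Xt where "Xt = pdt (pdx p) x t"
  have N1x: "pdx (nu1 p) x t = P * cnj X + X * cnj P"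
    unfolding pdx_def[of "nu1 p"] unfolding nu1eq P_def X_def
    by (rule vector_derivative_at, rule has_vector_derivative_eq_rhs[OF has_vector_derivative_mult[OF dP has_vector_derivative_cnj[OF dP]]]) simp
  have N2x: "pdx (nu2 p) x t = \<i>*(cnj X * X + cnj P * Z - (X * cnj X + P * cnj Z))"
  proof -
    have "((\<lambda>y. \<i>*(cnj (p y t) * pdx p y t - p y t * cnj (pdx p y t))) has_vector_derivative
          \<i>*((cnj P * Z + cnj X * X) - (P * cnj Z + X * cnj X))) (at x)"
      unfolding P_def X_def Z_def
      by (intro has_vector_derivative_mult_right has_vector_derivative_diff has_vector_derivative_mult
           dP dX has_vector_derivative_cnj)
    hence "pdx (nu2 p) x t = \<i>*((cnj P * Z + cnj X * X) - (P * cnj Z + X * cnj X))"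
      unfolding pdx_def[of "nu2 p"] unfolding nu2eq by (rule vector_derivative_at)
    thus ?thesis by (simp add: algebra_simps)
  qed
  have vN1t: "((\<lambda>s. nu1 p x s) has_vector_derivative (P * cnj Pt + Pt * cnj P)) (at t)"
    unfolding nu1eq P_def Pt_def
    by (rule has_vector_derivative_eq_rhs[OF has_vector_derivative_mult[OF dPt has_vector_derivative_cnj[OF dPt]]]) simp
  have N1t: "pdt (nu1 p) x t = P * cnj Pt + Pt * cnj P"
    unfolding pdt_def[of "nu1 p"] using vN1t by (rule vector_derivative_at)
  have vN2t: "((\<lambda>s. nu2 p x s) has_vector_derivative pdt (nu2 p) x t) (at t)"
  proof -
    have "((\<lambda>s. \<i>*(cnj (p x s) * pdx p x s - p x s * cnj (pdx p x s))) has_vector_derivative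
         \<i>*((cnj P * Xt + cnj Pt * X) - (P * cnj Xt + Pt * cnj X))) (at t)"
      unfolding P_def X_def Xt_def Pt_def
      by (intro has_vector_derivative_mult_right has_vector_derivative_diff has_vector_derivative_mult
           dPt dXt has_vector_derivative_cnj)
    hence "((\<lambda>s. nu2 p x s) has_vector_derivative \<i>*((cnj P * Xt + cnj Pt * X) - (P * cnj Xt + Pt * cnj X))) (at t)"
      unfolding nu2eq .
    thus ?thesis unfolding pdt_def[of "nu2 p"] by (simp add: vector_derivative_at)
  qed
  have vN1t': "((\<lambda>s. nu1 p x s) has_vector_derivative pdt (nu1 p) x t) (at t)"
    using vN1t N1t by simp
  have psi11eq: "\<And>s. Psi11 p c0 c1 c2 0 x s = \<i>/4 * nu2 p x s + \<i>/2*c2*nu1 p x s - \<i>*c0"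
    by (simp add: Psi11_def nu2eq nu1eq nsq cx1 conjf_def field_simps)
  have dfP: "(\<lambda>s. p x s) differentiable (at t)" using differentiableI_vector[OF dPt] .
  have dfX: "(\<lambda>s. pdx p x s) differentiable (at t)" using differentiableI_vector[OF dXt] .
  have dfZ: "(\<lambda>s. pdx (pdx p) x s) differentiable (at t)" using differentiableI_vector[OF dZt] .
  have cnjd: "\<And>f. f differentiable (at t) \<Longrightarrow> (\<lambda>s. cnj (f s)) differentiable (at t)"
    using differentiable_cnj_iff by blast
  have psi12f: "(\<lambda>s. Psi12 p c0 c1 c2 0 x s) differentiable (at t)"
    unfolding Psi12_def nsq by (intro derivative_intros dfP dfX dfZ cnjd)
  have psi21f: "(\<lambda>s. Psi21 p c0 c1 c2 0 x s) differentiable (at t)"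
    unfolding Psi21_def nsq cx1 cx2 conjf_def by (intro derivative_intros dfP dfX dfZ cnjd)
  obtain A12 where dA12: "((\<lambda>s. Psi12 p c0 c1 c2 0 x s) has_vector_derivative A12) (at t)"
    using vector_derivative_works psi12f by blast
  obtain A21 where dA21: "((\<lambda>s. Psi21 p c0 c1 c2 0 x s) has_vector_derivative A21) (at t)"
    using vector_derivative_works psi21f by blast
  define A11 where "A11 = \<i>/4 * pdt (nu2 p) x t + \<i>/2*c2*pdt (nu1 p) x t"
  have dA11: "((\<lambda>s. Psi11 p c0 c1 c2 0 x s) has_vector_derivative A11) (at t)"
  proof -
    have "((\<lambda>s. \<i>/4 * nu2 p x s + \<i>/2*c2*nu1 p x s - \<i>*c0) has_vector_derivative
       \<i>/4 * pdt (nu2 p) x t + \<i>/2*c2*pdt (nu1 p) x t - 0) (at t)"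
      by (intro has_vector_derivative_diff has_vector_derivative_add has_vector_derivative_mult_right
          vN2t vN1t' has_vector_derivative_const)
    thus ?thesis unfolding psi11eq A11_def by simp
  qed
  define D where "D = mat2 A11 A12 A21 (-A11)"
  have dPsi: "((\<lambda>s. Psi p c0 c1 c2 0 x s) has_vector_derivative D) (at t)"
  proof (rule vec_vd)
    fix i show "((\<lambda>s. Psi p c0 c1 c2 0 x s $ i) has_vector_derivative D $ i) (at t)"
    proof (rule vec_vd)
      fix j show "((\<lambda>s. Psi p c0 c1 c2 0 x s $ i $ j) has_vector_derivative D $ i $ j) (at t)"
        using exhaust_2[of i] exhaust_2[of j]
        by (auto simp: Psi_def mat2_def D_def dA11 dA12 dA21 has_vector_derivative_minus)
    qed
  qed
  have pdtPsi: "pdt (Psi p c0 c1 c2 0) x t = D"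
    unfolding pdt_def by (rule vector_derivative_at[OF dPsi])
  have laxe: "D $ 1 $ 1 = (Vmat p 0 x t ** Psi p c0 c1 c2 0 x t - Psi p c0 c1 c2 0 x t ** Vmat p 0 x t) $ 1 $ 1"
    using lax[of 0 x t] pdtPsi by simp
  hence laxe2: "A11 = (-pdx p x t) * Psi21 p c0 c1 c2 0 x t - Psi12 p c0 c1 c2 0 x t * cnj (pdx p x t)"
    by (simp add: D_def mat2_def matrix_matrix_mult_def sum_2 Vmat_def Psi_def cx1 conjf_def algebra_simps)
  have h0: "Psi12 p c0 c1 c2 0 x t = \<i>*P*\<mu>1*\<mu>2" using h[of 0] by (simp add: P_def)
  have E1: "-1/2*X + \<i>*complex_of_real c2*P = -\<i>*P*(\<mu>1+\<mu>2)"
  proof -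
    have "Psi12 p c0 c1 c2 1 x t - Psi12 p c0 c1 c2 (-1) x t = 2*(-1/2*X + \<i>*complex_of_real c2*P)"
      by (simp add: Psi12_def P_def X_def algebra_simps)
    moreover have "Psi12 p c0 c1 c2 1 x t - Psi12 p c0 c1 c2 (-1) x t = 2*(-\<i>*P*(\<mu>1+\<mu>2))"
      using h[of 1] h[of "-1"] by (simp add: P_def algebra_simps)
    ultimately have "2*(-1/2*X + \<i>*complex_of_real c2*P) = 2*(-\<i>*P*(\<mu>1+\<mu>2))" by (simp only:)
    thus ?thesis by (simp only: mult_cancel_left) simp
  qed
  have E0: "-\<i>/4*Z - \<i>/2*P*(P*cnj P) - 1/2*complex_of_real c2*X + \<i>*complex_of_real c1*P = \<i>*P*\<mu>1*\<mu>2"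
    using h0 by (simp add: Psi12_def nsq P_def X_def Z_def)
  have F1: "-1/2*cnj X - \<i>*complex_of_real c2*cnj P = \<i>*cnj P*(cnj \<mu>1+cnj \<mu>2)"
    using arg_cong[where f=cnj, OF E1] by (simp, algebra?)
  have F0: "\<i>/4*cnj Z + \<i>/2*cnj P*(P*cnj P) - 1/2*complex_of_real c2*cnj X - \<i>*complex_of_real c1*cnj P = -\<i>*cnj P*cnj \<mu>1*cnj \<mu>2"
    using arg_cong[where f=cnj, OF E0] by (simp, algebra?)
  have nls': "\<i>*Pt + Z + 2*(P*cnj P)*P = 0" using nls[of x t] by (simp add: nsq P_def Pt_def Z_def)
  have cnls': "-\<i>*cnj Pt + cnj Z + 2*(P*cnj P)*cnj P = 0" using arg_cong[where f=cnj, OF nls'] by (simp, algebra?)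
  have psi21v: "Psi21 p c0 c1 c2 0 x t = - cnj (Psi12 p c0 c1 c2 0 x t)"
    by (simp add: Psi21_def Psi12_def cx1 cx2 conjf_def algebra_simps)
  have laxf: "\<i>/4*pdt (nu2 p) x t + \<i>/2*complex_of_real c2*pdt (nu1 p) x t
     = (-X)*(\<i>*cnj P*cnj \<mu>1*cnj \<mu>2) - (\<i>*P*\<mu>1*\<mu>2)*cnj X"
    using laxe2 unfolding A11_def psi21v h0 by (simp add: X_def)
  note R = alg[OF E1 F1 E0 F0 nls' cnls' N1x N2x N1t laxf]
  show ?thesis
    unfolding nu1eq[symmetric] nsq
    using R by (simp add: nu1eq P_def algebra_simps)
qed

end
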